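(* Let $K$ be a field of characteristic different from $2$. For a $K$-vector space $V$, let $w_K(V)$ be the set $V$ with constant $0$ and ternary operations $\bar p_1(x,y,z)=x+\frac{z-y}{2}$, $\bar p_2(x,y,z)=\frac{x+z}{2}$, $\bar p_3(x,y,z)=\frac{x-y}{2}+z$. Then $w_K(V)$ is an algebra of $\mathrm{Hex}_3$, the addition $+:V\times V\to V$ is a $\mathrm{Hex}_3$-homomorphism making $w_K(V)$ an internal abelian group in $\mathrm{Hex}_3$, and $V\mapsto w_K(V)$ (identity on underlying maps) defines a faithful functor $w_K:K\text{-}\mathrm{Vect}\to\mathrm{Ab}(\mathrm{Hex}_3)$. Moreover, for $V\neq 0$, the objects $w_K(V)$ and $h(V,+)$ of $\mathrm{Ab}(\mathrm{Hex}_3)$ are not isomorphic.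
   Context: $\mathrm{Hex}_3$ is the pointed variety with one constant $0$ and three ternary operations $p_1,p_2,p_3$ subject exactly to $p_1(a,0,0)=a$, $p_2(a,0,a)=a$, $p_3(0,0,a)=a$, $p_1(a,a,b)=p_2(a,a,b)$, $p_2(a,b,b)=p_3(a,b,b)$, $p_i(b,b,b)=b$ ($i=1,2,3$). $\mathrm{Ab}(\mathrm{Hex}_3)$ is the category of internal abelian groups in $\mathrm{Hex}_3$. For an abelian group $(G,+)$, $h(G)$ denotes the $\mathrm{Hex}_3$-algebra on $G$ with constant $0$, $p_1(x,y,z)=x-y+z$, $p_2(x,y,z)=p_3(x,y,z)=z$, with internal abelian group structure given by $+$. *)

theory Defs
  imports Complex_Main
begin

record 'a hex3 =
  hzero :: 'a
  hp1 :: "'a \<Rightarrow> 'a \<Rightarrow> 'a \<Rightarrow> 'a"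
  hp2 :: "'a \<Rightarrow> 'a \<Rightarrow> 'a \<Rightarrow> 'a"
  hp3 :: "'a \<Rightarrow> 'a \<Rightarrow> 'a \<Rightarrow> 'a"

definition hex3_alg :: "('a, 'm) hex3_scheme \<Rightarrow> bool" where
  "hex3_alg A \<longleftrightarrow>
     (\<forall>a. hp1 A a (hzero A) (hzero A) = a) \<and>
     (\<forall>a. hp2 A a (hzero A) a = a) \<and>
     (\<forall>a. hp3 A (hzero A) (hzero A) a = a) \<and>
     (\<forall>a b. hp1 A a a b = hp2 A a a b) \<and>
     (\<forall>a b. hp2 A a b b = hp3 A a b b) \<and>
     (\<forall>b. hp1 A b b b = b) \<and> (\<forall>b. hp2 A b b b = b) \<and> (\<forall>b. hp3 A b b b = b)"

definition hex3_hom :: "('a, 'm) hex3_scheme \<Rightarrow> ('b, 'n) hex3_scheme \<Rightarrow> ('a \<Rightarrow> 'b) \<Rightarrow> bool" where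
  "hex3_hom A B f \<longleftrightarrow>
     f (hzero A) = hzero B \<and>
     (\<forall>x y z. f (hp1 A x y z) = hp1 B (f x) (f y) (f z)) \<and>
     (\<forall>x y z. f (hp2 A x y z) = hp2 B (f x) (f y) (f z)) \<and>
     (\<forall>x y z. f (hp3 A x y z) = hp3 B (f x) (f y) (f z))"

definition hex3_prod :: "('a, 'm) hex3_scheme \<Rightarrow> ('b, 'n) hex3_scheme \<Rightarrow> ('a \<times> 'b) hex3" where
  "hex3_prod A B =
     \<lparr> hzero = (hzero A, hzero B),
       hp1 = (\<lambda>x y z. (hp1 A (fst x) (fst y) (fst z), hp1 B (snd x) (snd y) (snd z))),
       hp2 = (\<lambda>x y z. (hp2 A (fst x) (fst y) (fst z), hp2 B (snd x) (snd y) (snd z))),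
       hp3 = (\<lambda>x y z. (hp3 A (fst x) (fst y) (fst z), hp3 B (snd x) (snd y) (snd z))) \<rparr>"

text \<open>Internal abelian group in Hex_3: a Hex_3-algebra A with addition, negation
  (homomorphisms A x A -> A and A -> A) and unit the constant of A (the unit map from
  the terminal algebra is a homomorphism iff it picks the constant), satisfying the
  abelian group axioms.\<close>
definition hex3_abgrp :: "('a, 'm) hex3_scheme \<Rightarrow> ('a \<Rightarrow> 'a \<Rightarrow> 'a) \<Rightarrow> ('a \<Rightarrow> 'a) \<Rightarrow> bool" where
  "hex3_abgrp A add neg \<longleftrightarrow>
     hex3_alg A \<and>
     hex3_hom (hex3_prod A A) A (\<lambda>(x, y). add x y) \<and>
     hex3_hom A A neg \<and>
     (\<forall>x y z. add (add x y) z = add x (add y z)) \<and>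
     (\<forall>x y. add x y = add y x) \<and>
     (\<forall>x. add (hzero A) x = x) \<and>
     (\<forall>x. add (neg x) x = hzero A)"

definition abhex3_mor :: "('a, 'm) hex3_scheme \<Rightarrow> ('a \<Rightarrow> 'a \<Rightarrow> 'a) \<Rightarrow>
    ('b, 'n) hex3_scheme \<Rightarrow> ('b \<Rightarrow> 'b \<Rightarrow> 'b) \<Rightarrow> ('a \<Rightarrow> 'b) \<Rightarrow> bool" where
  "abhex3_mor A addA B addB f \<longleftrightarrow>
     hex3_hom A B f \<and> (\<forall>x y. f (addA x y) = addB (f x) (f y))"

definition abhex3_iso :: "('a, 'm) hex3_scheme \<Rightarrow> ('a \<Rightarrow> 'a \<Rightarrow> 'a) \<Rightarrow>
    ('b, 'n) hex3_scheme \<Rightarrow> ('b \<Rightarrow> 'b \<Rightarrow> 'b) \<Rightarrow> bool" where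
  "abhex3_iso A addA B addB \<longleftrightarrow>
     (\<exists>f g. abhex3_mor A addA B addB f \<and> abhex3_mor B addB A addA g \<and>
            (\<forall>x. g (f x) = x) \<and> (\<forall>y. f (g y) = y))"

definition wK :: "('k::field \<Rightarrow> 'v::ab_group_add \<Rightarrow> 'v) \<Rightarrow> 'v hex3" where
  "wK sc = \<lparr> hzero = 0,
     hp1 = (\<lambda>x y z. x + sc (inverse 2) (z - y)),
     hp2 = (\<lambda>x y z. sc (inverse 2) (x + z)),
     hp3 = (\<lambda>x y z. sc (inverse 2) (x - y) + z) \<rparr>"

definition hG :: "'g::ab_group_add hex3" where
  "hG = \<lparr> hzero = 0, hp1 = (\<lambda>x y z. x - y + z), hp2 = (\<lambda>x y z. z), hp3 = (\<lambda>x y z. z) \<rparr>"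

end

theory Submission
  imports Defs
begin

lemma half_sum: assumes "(2::'k::field) \<noteq> 0" shows "inverse (2::'k) + inverse 2 = 1"
proof -
  have "inverse (2::'k) + inverse 2 = 2 * inverse 2" by (simp add: mult_2)
  also have "\<dots> = 1" using assms by simp
  finally show ?thesis .
qed

theorem mainTheorem18:
  fixes sV :: "'k::field \<Rightarrow> 'v::ab_group_add \<Rightarrow> 'v"
    and sW :: "'k \<Rightarrow> 'w::ab_group_add \<Rightarrow> 'w"
  assumes char: "(2::'k) \<noteq> 0"
    and V: "vector_space sV" and W: "vector_space sW"
  shows "hex3_alg (wK sV)
    \<and> hex3_hom (hex3_prod (wK sV) (wK sV)) (wK sV) (\<lambda>(x, y). x + y)
    \<and> hex3_abgrp (wK sV) (+) uminus
    \<and> (\<forall>f. Vector_Spaces.linear sV sW f \<longrightarrow> abhex3_mor (wK sV) (+) (wK sW) (+) f)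
    \<and> (\<forall>f g. Vector_Spaces.linear sV sW f \<longrightarrow> Vector_Spaces.linear sV sW g \<longrightarrow>
          (\<forall>x. f x = g x) \<longrightarrow> f = g)
    \<and> ((\<exists>v::'v. v \<noteq> 0) \<longrightarrow> \<not> abhex3_iso (wK sV) (+) (hG :: 'v hex3) (+))"
proof -
  interpret V: vector_space sV by (rule V)
  interpret W: vector_space sW by (rule W)
  define h where "h = inverse (2::'k)"
  have hh: "\<And>x. sV h x + sV h x = x"
    using half_sum[OF char] by (metis V.scale_left_distrib V.scale_one h_def)
  have A: "hex3_alg (wK sV)"
    unfolding hex3_alg_def wK_def h_def[symmetric] hex3.select_convs
  proof (intro conjI allI)
    fix a b :: 'v
    have e1: "a = sV h a + sV h a" using hh by simp
    show "a + sV h (b - a) = sV h (a + b)"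
      by (subst (1) e1) (simp add: V.scale_right_distrib V.scale_right_diff_distrib algebra_simps)
    show "sV h (a + b) = sV h (a - b) + b"
      by (subst (3) hh[of b, symmetric]) (simp add: V.scale_right_distrib V.scale_right_diff_distrib algebra_simps)
  qed (simp_all add: V.scale_right_distrib hh)
  have B: "hex3_hom (hex3_prod (wK sV) (wK sV)) (wK sV) (\<lambda>(x, y). x + y)"
    unfolding hex3_hom_def hex3_prod_def wK_def h_def[symmetric]
    by (simp add: V.scale_right_distrib V.scale_right_diff_distrib algebra_simps)
  have N: "hex3_hom (wK sV) (wK sV) uminus"
    unfolding hex3_hom_def wK_def h_def[symmetric]
    by (simp add: V.scale_right_distrib V.scale_right_diff_distrib V.scale_minus_right algebra_simps)
  have C: "hex3_abgrp (wK sV) (+) uminus"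
    unfolding hex3_abgrp_def using A B N by (simp add: wK_def algebra_simps)
  have D: "\<forall>f. Vector_Spaces.linear sV sW f \<longrightarrow> abhex3_mor (wK sV) (+) (wK sW) (+) f"
  proof (intro allI impI)
    fix f assume f: "Vector_Spaces.linear sV sW f"
    interpret f: Vector_Spaces.linear sV sW f by (rule f)
    show "abhex3_mor (wK sV) (+) (wK sW) (+) f"
      unfolding abhex3_mor_def hex3_hom_def wK_def
      by (simp add: f.add f.diff f.scale f.zero)
  qed
  have E: "\<not> abhex3_iso (wK sV) (+) (hG :: 'v hex3) (+)" if v: "v \<noteq> 0" for v :: 'v
  proof
    assume "abhex3_iso (wK sV) (+) (hG :: 'v hex3) (+)"
    then obtain f g where f: "abhex3_mor (wK sV) (+) (hG :: 'v hex3) (+) f"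
      and gf: "\<forall>x. g (f x) = x" unfolding abhex3_iso_def by blast
    have "f (sV h (v + 0)) = f 0"
      using f unfolding abhex3_mor_def hex3_hom_def wK_def hG_def h_def
      by (metis hex3.select_convs(3))
    hence "sV h v = 0" using gf by (metis add_0_right)
    hence "v = 0" using hh[of v] by (metis add_0_right)
    with v show False by simp
  qed
  show ?thesis using A B C D E by auto
qed

end
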